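(* Let $A\in\mathbb{C}^{n\times n}$ be Hermitian and let $Q\in\mathbb{C}^{n\times k}$, $2\le k\le n$, have orthonormal columns. Let $Q^*AQ=\Omega\widehat\Lambda\Omega^*$ be an eigendecomposition with $\Omega$ unitary and $\widehat\Lambda=\mathrm{diag}(\widehat\lambda_1,\ldots,\widehat\lambda_k)$, and let $\widehat X=[\widehat x_1,\ldots,\widehat x_k]=Q\Omega$ (Ritz values $\widehat\lambda_i$, Ritz vectors $\widehat x_i$). Let $Q_\perp\in\mathbb{C}^{n\times(n-k)}$ be such that $[Q\ Q_\perp]$ is unitary, so that $$[Q\Omega,\,Q_\perp]^*A[Q\Omega,\,Q_\perp]=\begin{bmatrix}\widehat\Lambda & R^*\\ R & A_3\end{bmatrix},\qquad R=Q_\perp^*AQ\Omega=[r_1,\ldots,r_k],\quad A_3=Q_\perp^*AQ_\perp .$$ Consider the Ritz pair $(\widehat\lambda,\widehat x)=(\widehat\lambda_1,\widehat x_1)$, let $\widehat\Lambda_2=\mathrm{diag}(\widehat\lambda_2,\ldots,\widehat\lambda_k)$ and $R_2=[r_2,\ldots,r_k]$. Let $(\lambda,x)$ be an eigenpair of $A$ with $\|x\|=1$, and define $\mathrm{Gap}=\min|\lambda-\lambda(A_3)|$ and $\mathrm{gap}=\min|\lambda-\lambda(\widehat\Lambda_2)|$. Then $$\sin\angle(x,\widehat x)\le\frac{\|R\|}{\mathrm{Gap}}\sqrt{1+\frac{\|R_2\|^2}{\mathrm{gap}^2}}\ \le\ \frac{\|R\|}{\mathrm{Gap}}\Big(1+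\frac{\|R_2\|}{\mathrm{gap}}\Big).$$
   Context: $\|\cdot\|$ is the Euclidean norm for vectors and the spectral norm for matrices. $\lambda(M)$ denotes the set of eigenvalues of a Hermitian matrix $M$, and $\min|\lambda-\lambda(M)|$ is the distance from $\lambda$ to that set. For unit vectors, $\angle(x,\widehat x)=\arccos|\widehat x^*x|$. Note $\|r_i\|=\|A\widehat x_i-\widehat\lambda_i\widehat x_i\|$. A bound with a vanishing denominator is interpreted as $+\infty$. *)

theory Defs
  imports Complex_Main "HOL-Library.Extended_Real"
    "Jordan_Normal_Form.Schur_Decomposition" "Jordan_Normal_Form.Char_Poly"
begin

definition vnorm :: "complex vec \<Rightarrow> real" where
  "vnorm v = sqrt (\<Sum>i<dim_vec v. (cmod (v $ i))\<^sup>2)"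

definition snorm :: "complex mat \<Rightarrow> real" where
  "snorm M = Sup {vnorm (M *\<^sub>v v) | v. v \<in> carrier_vec (dim_col M) \<and> vnorm v = 1}"

definition cinner :: "complex vec \<Rightarrow> complex vec \<Rightarrow> complex" where
  "cinner y x = (\<Sum>i<dim_vec x. cnj (y $ i) * x $ i)"

definition vangle :: "complex vec \<Rightarrow> complex vec \<Rightarrow> real" where
  "vangle x xh = arccos (cmod (cinner xh x))"

definition hermitian :: "complex mat \<Rightarrow> bool" where
  "hermitian A \<longleftrightarrow> A \<in> carrier_mat (dim_row A) (dim_row A) \<and> mat_adjoint A = A"

definition unitary :: "complex mat \<Rightarrow> bool" where
  "unitary U \<longleftrightarrow> U \<in> carrier_mat (dim_row U) (dim_row U) \<and>
     mat_adjoint U * U = 1\<^sub>m (dim_row U) \<and> U * mat_adjoint U = 1\<^sub>m (dim_row U)"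

definition hcat :: "complex mat \<Rightarrow> complex mat \<Rightarrow> complex mat" where
  "hcat Q P = mat (dim_row Q) (dim_col Q + dim_col P)
     (\<lambda>(i,j). if j < dim_col Q then Q $$ (i,j) else P $$ (i, j - dim_col Q))"

definition diagm :: "nat \<Rightarrow> (nat \<Rightarrow> real) \<Rightarrow> complex mat" where
  "diagm m d = mat m m (\<lambda>(i,j). if i = j then complex_of_real (d i) else 0)"

text \<open>Distance from mu to the spectrum of M, min |mu - lambda(M)|, in the extended reals
  (it is +infinity when M has no eigenvalues, e.g. when M is 0 x 0).\<close>
definition dist_spec :: "complex \<Rightarrow> complex mat \<Rightarrow> ereal" where
  "dist_spec \<mu> M = Inf {ereal (cmod (\<mu> - \<nu>)) | \<nu>. eigenvalue M \<nu>}"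

end

theory Submission
  imports Defs "HOL-Computational_Algebra.Fundamental_Theorem_Algebra"
begin


lemma adj_dims[simp]: "dim_row (mat_adjoint M) = dim_col (M :: complex mat)" "dim_col (mat_adjoint M) = dim_row M"
  unfolding mat_adjoint_def by (auto simp: mat_of_rows_def)

lemma adj_carrier: "(M :: complex mat) \<in> carrier_mat r c \<Longrightarrow> mat_adjoint M \<in> carrier_mat c r"
  unfolding carrier_mat_def by simp

lemma adj_index[simp]: "i < dim_col M \<Longrightarrow> j < dim_row M \<Longrightarrow> mat_adjoint M $$ (i,j) = cnj (M $$ (j,i))"
  unfolding mat_adjoint_def mat_of_rows_def by simp

lemma adj_adj[simp]: "mat_adjoint (mat_adjoint M) = (M :: complex mat)"
proof (rule eq_matI)
  fix i j assume "i < dim_row M" "j < dim_col M"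
  thus "mat_adjoint (mat_adjoint M) $$ (i, j) = M $$ (i, j)" by simp
qed simp_all

lemma adj_mult: fixes A B :: "complex mat" assumes "A \<in> carrier_mat r m" "B \<in> carrier_mat m c"
  shows "mat_adjoint (A * B) = mat_adjoint B * mat_adjoint A"
proof (rule eq_matI)
  fix i j assume i: "i < dim_row (mat_adjoint B * mat_adjoint A)" and j: "j < dim_col (mat_adjoint B * mat_adjoint A)"
  hence i': "i < c" and j': "j < r" using assms by auto
  have "mat_adjoint (A * B) $$ (i, j) = cnj ((A * B) $$ (j, i))" using i' j' assms by auto
  also have "\<dots> = (\<Sum>l<m. cnj (A $$ (j,l)) * cnj (B $$ (l,i)))"
    using i' j' assms by (auto simp: scalar_prod_def atLeast0LessThan)
  also have "\<dots> = (\<Sum>l<m. mat_adjoint B $$ (i,l) * mat_adjoint A $$ (l,j))"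
    using i' j' assms by (intro sum.cong refl, auto)
  also have "\<dots> = (mat_adjoint B * mat_adjoint A) $$ (i, j)"
    using i' j' assms by (auto simp: scalar_prod_def atLeast0LessThan)
  finally show "mat_adjoint (A * B) $$ (i, j) = (mat_adjoint B * mat_adjoint A) $$ (i, j)" .
qed (insert assms, auto)

lemma cinner_adj: assumes M: "M \<in> carrier_mat r c" and u: "u \<in> carrier_vec r" and v: "v \<in> carrier_vec c"
  shows "cinner u (M *\<^sub>v v) = cinner (mat_adjoint M *\<^sub>v u) v"
proof -
  have "cinner u (M *\<^sub>v v) = (\<Sum>i<r. \<Sum>j<c. cnj (u $ i) * (M $$ (i,j) * v $ j))"
    unfolding cinner_def
  proof (rule sum.cong)
    fix i assume "i \<in> {..<r}"
    hence i: "i < r" using M by auto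
    have "(M *\<^sub>v v) $ i = (\<Sum>j<c. M $$ (i,j) * v $ j)"
      using i M v unfolding mult_mat_vec_def scalar_prod_def row_def
      by (simp add: atLeast0LessThan)
    thus "cnj (u $ i) * (M *\<^sub>v v) $ i = (\<Sum>j<c. cnj (u $ i) * (M $$ (i,j) * v $ j))"
      by (simp add: sum_distrib_left)
  qed (use M in auto)
  also have "\<dots> = (\<Sum>j<c. \<Sum>i<r. cnj (u $ i) * (M $$ (i,j) * v $ j))" by (rule sum.swap)
  also have "\<dots> = cinner (mat_adjoint M *\<^sub>v u) v"
    unfolding cinner_def
  proof (rule sum.cong)
    fix j assume "j \<in> {..<dim_vec v}"
    hence j: "j < c" using v by auto
    have "(mat_adjoint M *\<^sub>v u) $ j = (\<Sum>i<r. cnj (M $$ (i,j)) * u $ i)"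
      using j M u unfolding mult_mat_vec_def scalar_prod_def row_def
      by (simp add: atLeast0LessThan)
    hence "cnj ((mat_adjoint M *\<^sub>v u) $ j) * v $ j = (\<Sum>i<r. M $$ (i,j) * cnj (u $ i)) * v $ j"
      by simp
    also have "\<dots> = (\<Sum>i<r. cnj (u $ i) * (M $$ (i,j) * v $ j))"
      unfolding sum_distrib_right by (intro sum.cong refl) (simp add: ac_simps)
    finally show "(\<Sum>i<r. cnj (u $ i) * (M $$ (i,j) * v $ j)) = cnj ((mat_adjoint M *\<^sub>v u) $ j) * v $ j" by simp
  qed (use v in auto)
  finally show ?thesis .
qed

lemma cinner_add_right: "dim_vec v = dim_vec w \<Longrightarrow> cinner u (v + w) = cinner u v + cinner u w"
  by (auto simp: cinner_def sum.distrib algebra_simps)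
lemma cinner_add_left: "dim_vec u = dim_vec w \<Longrightarrow> dim_vec u = dim_vec v \<Longrightarrow> cinner (u + w) v = cinner u v + cinner w v"
  by (auto simp: cinner_def sum.distrib algebra_simps)
lemma cinner_minus_right: "dim_vec v = dim_vec w \<Longrightarrow> cinner u (v - w) = cinner u v - cinner u w"
  by (auto simp: cinner_def sum_subtractf algebra_simps)
lemma cinner_minus_left: "dim_vec u = dim_vec w \<Longrightarrow> dim_vec u = dim_vec v \<Longrightarrow> cinner (u - w) v = cinner u v - cinner w v"
  by (auto simp: cinner_def sum_subtractf algebra_simps)
lemma cinner_smult_right: "cinner u (c \<cdot>\<^sub>v v) = c * cinner u v"
  by (auto simp: cinner_def sum_distrib_left algebra_simps)
lemma cinner_smult_left: "dim_vec u = dim_vec v \<Longrightarrow> cinner (c \<cdot>\<^sub>v u) v = cnj c * cinner u v"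
  by (auto simp: cinner_def sum_distrib_left algebra_simps)
lemma cinner_zero_right[simp]: "cinner u (0\<^sub>v n) = 0"
  by (auto simp: cinner_def)
lemma cinner_zero_left[simp]: "dim_vec v = n \<Longrightarrow> cinner (0\<^sub>v n) v = 0"
  by (auto simp: cinner_def)
lemma cinner_commute: "dim_vec u = dim_vec v \<Longrightarrow> cinner v u = cnj (cinner u v)"
  by (auto simp: cinner_def mult.commute)

lemma cinner_self: "cinner v v = complex_of_real ((vnorm v)\<^sup>2)"
proof -
  have "cinner v v = (\<Sum>i<dim_vec v. complex_of_real ((cmod (v $ i))\<^sup>2))"
    unfolding cinner_def by (intro sum.cong refl, metis complex_norm_square mult.commute)
  also have "\<dots> = complex_of_real ((vnorm v)\<^sup>2)"
    unfolding vnorm_def by (simp add: sum_nonneg)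
  finally show ?thesis .
qed

lemma vnorm_nonneg: "0 \<le> vnorm v" unfolding vnorm_def by (simp add: sum_nonneg)

lemma vnorm_sq: "(vnorm v)\<^sup>2 = (\<Sum>i<dim_vec v. (cmod (v $ i))\<^sup>2)"
  unfolding vnorm_def by (simp add: sum_nonneg)

lemma vnorm_zero_iff: assumes "v \<in> carrier_vec m" shows "vnorm v = 0 \<longleftrightarrow> v = 0\<^sub>v m"
proof
  assume "vnorm v = 0"
  then have "(\<Sum>i<m. (cmod (v $ i))\<^sup>2) = 0" using vnorm_sq[of v] assms by auto
  then have "\<forall>i\<in>{..<m}. (cmod (v $ i))\<^sup>2 = 0" by (subst (asm) sum_nonneg_eq_0_iff, auto)
  then show "v = 0\<^sub>v m" using assms by (intro eq_vecI, auto)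
qed (auto simp: vnorm_def)

lemma vnorm_smult: "vnorm (c \<cdot>\<^sub>v v) = cmod c * vnorm v"
  unfolding vnorm_def by (simp add: norm_mult power_mult_distrib sum_distrib_left[symmetric] real_sqrt_mult)

lemma pythag: assumes "dim_vec u = dim_vec v" "cinner u v = 0"
  shows "(vnorm (u + v))\<^sup>2 = (vnorm u)\<^sup>2 + (vnorm v)\<^sup>2"
proof -
  have "cinner v u = 0" using assms cinner_commute[of u v] by auto
  have "complex_of_real ((vnorm (u + v))\<^sup>2) = cinner (u+v) (u+v)" by (simp add: cinner_self)
  also have "\<dots> = cinner u u + cinner u v + cinner v u + cinner v v"
    using assms by (simp add: cinner_add_left cinner_add_right)
  also have "\<dots> = complex_of_real ((vnorm u)\<^sup>2 + (vnorm v)\<^sup>2)"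
    using assms \<open>cinner v u = 0\<close> by (simp add: cinner_self)
  finally show ?thesis using of_real_eq_iff by blast
qed

lemma cauchy_schwarz_real: fixes f g :: "nat \<Rightarrow> real"
  shows "(\<Sum>i<m. f i * g i)\<^sup>2 \<le> (\<Sum>i<m. (f i)\<^sup>2) * (\<Sum>i<m. (g i)\<^sup>2)"
proof (induction m)
  case (Suc m)
  let ?a = "\<Sum>i<m. f i * g i" and ?F = "\<Sum>i<m. (f i)\<^sup>2" and ?G = "\<Sum>i<m. (g i)\<^sup>2"
  have F: "0 \<le> ?F" and G: "0 \<le> ?G" by (auto intro: sum_nonneg)
  have "(2 * ?a * (f m * g m)) \<le> ?F * (g m)\<^sup>2 + ?G * (f m)\<^sup>2"
  proof -
    have sa: "\<bar>?a\<bar> \<le> sqrt ?F * sqrt ?G"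
    proof -
      have "\<bar>?a\<bar>\<^sup>2 \<le> ?F * ?G" using Suc.IH by (simp only: power2_abs)
      hence "\<bar>?a\<bar> \<le> sqrt (?F * ?G)" by (rule real_le_rsqrt)
      thus ?thesis by (simp add: real_sqrt_mult)
    qed
    have "?a * (f m * g m) \<le> \<bar>?a * (f m * g m)\<bar>" by (rule abs_ge_self)
    hence "(2 * ?a * (f m * g m)) \<le> 2 * \<bar>?a\<bar> * \<bar>f m * g m\<bar>"
      by (simp add: abs_mult)
    also have "\<dots> \<le> 2 * (sqrt ?F * sqrt ?G) * \<bar>f m * g m\<bar>"
      using sa by (intro mult_right_mono, auto)
    also have "\<dots> = 2 * (sqrt ?F * \<bar>g m\<bar>) * (sqrt ?G * \<bar>f m\<bar>)" by (simp add: abs_mult)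
    also have "\<dots> \<le> (sqrt ?F * \<bar>g m\<bar>)\<^sup>2 + (sqrt ?G * \<bar>f m\<bar>)\<^sup>2"
    proof -
      have "0 \<le> (sqrt ?F * \<bar>g m\<bar> - sqrt ?G * \<bar>f m\<bar>)\<^sup>2" by simp
      thus ?thesis by (simp add: power2_diff)
    qed
    also have "\<dots> = ?F * (g m)\<^sup>2 + ?G * (f m)\<^sup>2"
      using F G by (simp add: power_mult_distrib)
    finally show ?thesis .
  qed
  note h1 = this
  have h2: "(?a + f m * g m)\<^sup>2 = ?a\<^sup>2 + 2*?a*(f m*g m) + (f m*g m)\<^sup>2" by (simp add: power2_sum)
  have h3: "(?F + (f m)\<^sup>2)*(?G + (g m)\<^sup>2) = ?F*?G + (?F*(g m)\<^sup>2 + ?G*(f m)\<^sup>2) + (f m * g m)\<^sup>2"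
    by (simp add: algebra_simps power_mult_distrib)
  have e1: "(\<Sum>i<Suc m. f i * g i) = ?a + f m * g m" by simp
  have e2: "(\<Sum>i<Suc m. (f i)\<^sup>2) = ?F + (f m)\<^sup>2" by simp
  have e3: "(\<Sum>i<Suc m. (g i)\<^sup>2) = ?G + (g m)\<^sup>2" by simp
  show ?case unfolding e1 e2 e3 h2 h3 using h1 Suc.IH by linarith
qed simp

lemma cauchy_schwarz: assumes "dim_vec u = dim_vec v"
  shows "cmod (cinner u v) \<le> vnorm u * vnorm v"
proof -
  let ?m = "dim_vec v"
  have "cmod (cinner u v) \<le> (\<Sum>i<?m. cmod (u $ i) * cmod (v $ i))"
    unfolding cinner_def by (rule order.trans[OF norm_sum], simp add: norm_mult)
  also have "\<dots> \<le> sqrt ((\<Sum>i<?m. (cmod (u $ i))\<^sup>2) * (\<Sum>i<?m. (cmod (v $ i))\<^sup>2))"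
    by (rule real_le_rsqrt, rule cauchy_schwarz_real)
  also have "\<dots> = vnorm u * vnorm v" unfolding vnorm_def using assms by (simp add: real_sqrt_mult)
  finally show ?thesis .
qed



lemma abs_entry_le_vnorm: "j < dim_vec v \<Longrightarrow> cmod (v $ j) \<le> vnorm v"
proof -
  assume j: "j < dim_vec v"
  have "(cmod (v $ j))\<^sup>2 \<le> (\<Sum>i<dim_vec v. (cmod (v $ i))\<^sup>2)"
    by (rule member_le_sum[of j "{..<dim_vec v}" "\<lambda>i. (cmod (v $ i))\<^sup>2"], use j in auto)
  hence "cmod (v $ j) \<le> sqrt (\<Sum>i<dim_vec v. (cmod (v $ i))\<^sup>2)"
    by (intro real_le_rsqrt)
  thus ?thesis unfolding vnorm_def .
qed

lemma vnorm_zero[simp]: "vnorm (0\<^sub>v n) = 0" by (simp add: vnorm_def)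

lemma mat_vec_entry: "M \<in> carrier_mat r c \<Longrightarrow> v \<in> carrier_vec c \<Longrightarrow> i < r \<Longrightarrow>
   (M *\<^sub>v v) $ i = (\<Sum>j<c. M $$ (i,j) * v $ j)"
  unfolding mult_mat_vec_def scalar_prod_def row_def by (simp add: atLeast0LessThan)

lemma snorm_set_bdd: fixes M :: "complex mat"
  shows "bdd_above {vnorm (M *\<^sub>v v) | v. v \<in> carrier_vec (dim_col M) \<and> vnorm v = 1}"
proof -
  let ?r = "dim_row M" and ?c = "dim_col M"
  define \<rho> where "\<rho> i = (\<Sum>j<?c. cmod (M $$ (i,j)))" for i
  define C where "C = sqrt (\<Sum>i<?r. (\<rho> i)\<^sup>2)"
  show ?thesis
  proof (rule bdd_aboveI[of _ C])
    fix y assume "y \<in> {vnorm (M *\<^sub>v v) | v. v \<in> carrier_vec (dim_col M) \<and> vnorm v = 1}"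
    then obtain v where v: "v \<in> carrier_vec ?c" "vnorm v = 1" and y: "y = vnorm (M *\<^sub>v v)" by auto
    have M: "M \<in> carrier_mat ?r ?c" by auto
    have "cmod ((M *\<^sub>v v) $ i) \<le> \<rho> i" if i: "i < ?r" for i
    proof -
      have "cmod ((M *\<^sub>v v) $ i) = cmod (\<Sum>j<?c. M $$ (i,j) * v $ j)"
        using mat_vec_entry[OF M v(1) i] by simp
      also have "\<dots> \<le> (\<Sum>j<?c. cmod (M $$ (i,j) * v $ j))" by (rule norm_sum)
      also have "\<dots> \<le> (\<Sum>j<?c. cmod (M $$ (i,j)))"
      proof (rule sum_mono)
        fix j assume "j \<in> {..<?c}"
        hence "cmod (v $ j) \<le> 1" using abs_entry_le_vnorm[of j v] v by auto
        thus "cmod (M $$ (i,j) * v $ j) \<le> cmod (M $$ (i,j))"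
          by (simp add: norm_mult mult_left_le)
      qed
      finally show ?thesis unfolding \<rho>_def .
    qed
    hence "(\<Sum>i<?r. (cmod ((M *\<^sub>v v) $ i))\<^sup>2) \<le> (\<Sum>i<?r. (\<rho> i)\<^sup>2)"
      by (intro sum_mono power_mono, auto)
    thus "y \<le> C" unfolding y C_def vnorm_def by simp
  qed
qed

lemma vnorm_unit: "j < c \<Longrightarrow> vnorm (unit_vec c j :: complex vec) = 1"
proof -
  assume j: "j < c"
  have "(\<Sum>i<c. (cmod (unit_vec c j $ i))\<^sup>2) = (\<Sum>i<c. if i = j then 1 else 0)"
    by (intro sum.cong refl, auto simp: unit_vec_def)
  also have "\<dots> = 1" using j by simp
  finally show ?thesis unfolding vnorm_def by simp
qed

lemma snorm_nonneg: fixes M :: "complex mat" assumes "0 < dim_col M" shows "0 \<le> snorm M"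
proof -
  have "vnorm (M *\<^sub>v unit_vec (dim_col M) 0) \<le> snorm M"
    unfolding snorm_def
    by (rule cSup_upper[OF _ snorm_set_bdd], use assms vnorm_unit in auto)
  thus ?thesis using vnorm_nonneg order.trans by blast
qed

lemma snorm_bound: fixes M :: "complex mat" assumes v: "v \<in> carrier_vec (dim_col M)"
  shows "vnorm (M *\<^sub>v v) \<le> snorm M * vnorm v"
proof (cases "vnorm v = 0")
  case True
  hence "v = 0\<^sub>v (dim_col M)" using vnorm_zero_iff[OF v] by auto
  hence "M *\<^sub>v v = 0\<^sub>v (dim_row M)" by auto
  hence "vnorm (M *\<^sub>v v) = 0" by (simp add: vnorm_zero_iff)
  thus ?thesis using True by simp
next
  case False
  hence pos: "0 < vnorm v" using vnorm_nonneg[of v] by auto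
  define w where "w = complex_of_real (1 / vnorm v) \<cdot>\<^sub>v v"
  have w: "w \<in> carrier_vec (dim_col M)" "vnorm w = 1"
    using v pos unfolding w_def by (auto simp: vnorm_smult norm_divide)
  have "M *\<^sub>v w = complex_of_real (1 / vnorm v) \<cdot>\<^sub>v (M *\<^sub>v v)"
    unfolding w_def by (rule mult_mat_vec[OF _ v], auto)
  hence "vnorm (M *\<^sub>v w) = vnorm (M *\<^sub>v v) / vnorm v"
    using pos by (simp add: vnorm_smult norm_divide)
  moreover have "vnorm (M *\<^sub>v w) \<le> snorm M"
    unfolding snorm_def by (rule cSup_upper[OF _ snorm_set_bdd], use w in auto)
  ultimately show ?thesis using pos by (simp add: divide_le_eq)
qed

lemma snorm_adj_bound: fixes M :: "complex mat" assumes b: "b \<in> carrier_vec (dim_row M)" and c: "0 < dim_col M"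
  shows "vnorm (mat_adjoint M *\<^sub>v b) \<le> snorm M * vnorm b"
proof -
  let ?y = "mat_adjoint M *\<^sub>v b"
  have M: "M \<in> carrier_mat (dim_row M) (dim_col M)" by auto
  have y: "?y \<in> carrier_vec (dim_col M)" unfolding carrier_vec_def by simp
  have "complex_of_real ((vnorm ?y)\<^sup>2) = cinner ?y ?y" by (simp add: cinner_self)
  also have "\<dots> = cinner b (M *\<^sub>v ?y)" by (rule cinner_adj[OF M b y, symmetric])
  finally have "(vnorm ?y)\<^sup>2 = cmod (cinner b (M *\<^sub>v ?y))"
    by (metis norm_of_real abs_of_nonneg zero_le_power2)
  also have "\<dots> \<le> vnorm b * vnorm (M *\<^sub>v ?y)" by (rule cauchy_schwarz, use b in auto)
  also have "\<dots> \<le> vnorm b * (snorm M * vnorm ?y)"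
    by (rule mult_left_mono[OF snorm_bound[OF y] vnorm_nonneg])
  finally have *: "(vnorm ?y)\<^sup>2 \<le> (snorm M * vnorm b) * vnorm ?y" by (simp add: ac_simps)
  show ?thesis
  proof (cases "vnorm ?y = 0")
    case True thus ?thesis using snorm_nonneg[OF c] vnorm_nonneg[of b] by simp
  next
    case False
    hence "0 < vnorm ?y" using vnorm_nonneg[of ?y] by auto
    thus ?thesis using * by (simp add: power2_eq_square)
  qed
qed




lemma herm_adj: "hermitian H \<Longrightarrow> mat_adjoint H = H" unfolding hermitian_def by auto

lemma herm_cinner: assumes "hermitian H" "H \<in> carrier_mat m m" "u \<in> carrier_vec m" "v \<in> carrier_vec m"
  shows "cinner u (H *\<^sub>v v) = cinner (H *\<^sub>v u) v"
  using cinner_adj[OF assms(2-4)] herm_adj[OF assms(1)] by simp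

lemma herm_shift: assumes "hermitian H" "H \<in> carrier_mat m m" "u \<in> carrier_vec m" "v \<in> carrier_vec m"
  shows "cinner u (H *\<^sub>v v - r \<cdot>\<^sub>v v) = cinner (H *\<^sub>v u - cnj r \<cdot>\<^sub>v u) v"
proof -
  have "cinner u (H *\<^sub>v v - r \<cdot>\<^sub>v v) = cinner u (H *\<^sub>v v) - r * cinner u v"
    using assms by (simp add: cinner_minus_right cinner_smult_right)
  also have "\<dots> = cinner (H *\<^sub>v u) v - cnj (cnj r) * cinner u v"
    using herm_cinner[OF assms] by simp
  also have "\<dots> = cinner (H *\<^sub>v u - cnj r \<cdot>\<^sub>v u) v"
    using assms by (simp add: cinner_minus_left cinner_smult_left)
  finally show ?thesis .
qed

lemma herm_eig_real: assumes "hermitian H" "H \<in> carrier_mat m m" "e \<in> carrier_vec m" "e \<noteq> 0\<^sub>v m"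
  and "H *\<^sub>v e = r \<cdot>\<^sub>v e" shows "cnj r = r"
proof -
  have "cinner e (H *\<^sub>v e) = r * cinner e e" using assms by (simp add: cinner_smult_right)
  moreover have "cinner (H *\<^sub>v e) e = cnj r * cinner e e" using assms by (simp add: cinner_smult_left)
  moreover have "cinner e e \<noteq> 0" using assms vnorm_zero_iff[OF assms(3)] by (simp add: cinner_self)
  ultimately show ?thesis using herm_cinner[OF assms(1,2,3,3)] by simp
qed

fun pv :: "complex mat \<Rightarrow> complex list \<Rightarrow> complex vec \<Rightarrow> complex vec" where
  "pv H [] b = b"
| "pv H (r # rs) b = H *\<^sub>v pv H rs b - r \<cdot>\<^sub>v pv H rs b"

context
  fixes H :: "complex mat" and m :: nat
  assumes H: "H \<in> carrier_mat m m"
begin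

lemma pv_carrier[simp]: "b \<in> carrier_vec m \<Longrightarrow> pv H rs b \<in> carrier_vec m"
  by (induction rs, use H in auto)

lemma pv_append: "pv H (xs @ ys) b = pv H xs (pv H ys b)"
  by (induction xs, auto)

lemma pv_minus: assumes "b1 \<in> carrier_vec m" "b2 \<in> carrier_vec m"
  shows "pv H rs (b1 - b2) = pv H rs b1 - pv H rs b2"
proof (induction rs)
  case (Cons r rs)
  let ?y1 = "pv H rs b1" and ?y2 = "pv H rs b2"
  have y: "?y1 \<in> carrier_vec m" "?y2 \<in> carrier_vec m" using assms by auto
  have "pv H (r # rs) (b1 - b2) = H *\<^sub>v (?y1 - ?y2) - r \<cdot>\<^sub>v (?y1 - ?y2)" using Cons by simp
  also have "\<dots> = (H *\<^sub>v ?y1 - H *\<^sub>v ?y2) - r \<cdot>\<^sub>v (?y1 - ?y2)"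
    using mult_minus_distrib_mat_vec[OF H y] by simp
  also have "\<dots> = (H *\<^sub>v ?y1 - r \<cdot>\<^sub>v ?y1) - (H *\<^sub>v ?y2 - r \<cdot>\<^sub>v ?y2)"
    by (rule eq_vecI, use y H in \<open>auto simp del: index_mult_mat_vec simp: algebra_simps\<close>)
  finally show ?case by simp
qed simp

lemma pv_smult: assumes "b \<in> carrier_vec m"
  shows "pv H rs (c \<cdot>\<^sub>v b) = c \<cdot>\<^sub>v pv H rs b"
proof (induction rs)
  case (Cons r rs)
  let ?y = "pv H rs b"
  have y: "?y \<in> carrier_vec m" using assms by auto
  have "pv H (r # rs) (c \<cdot>\<^sub>v b) = H *\<^sub>v (c \<cdot>\<^sub>v ?y) - r \<cdot>\<^sub>v (c \<cdot>\<^sub>v ?y)" using Cons by simp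
  also have "\<dots> = c \<cdot>\<^sub>v (H *\<^sub>v ?y) - r \<cdot>\<^sub>v (c \<cdot>\<^sub>v ?y)"
    using mult_mat_vec[OF H y] by simp
  also have "\<dots> = c \<cdot>\<^sub>v (H *\<^sub>v ?y - r \<cdot>\<^sub>v ?y)"
    by (rule eq_vecI, use y H in \<open>auto simp del: index_mult_mat_vec simp: algebra_simps\<close>)
  finally show ?case by simp
qed simp

lemma pv_commute: assumes "b \<in> carrier_vec m"
  shows "pv H rs (H *\<^sub>v b - s \<cdot>\<^sub>v b) = H *\<^sub>v pv H rs b - s \<cdot>\<^sub>v pv H rs b"
proof (induction rs)
  case (Cons r rs)
  let ?y = "pv H rs b"
  have y: "?y \<in> carrier_vec m" using assms by auto
  have Hy: "H *\<^sub>v ?y \<in> carrier_vec m" using H y by auto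
  have "pv H (r # rs) (H *\<^sub>v b - s \<cdot>\<^sub>v b) = H *\<^sub>v (H *\<^sub>v ?y - s \<cdot>\<^sub>v ?y) - r \<cdot>\<^sub>v (H *\<^sub>v ?y - s \<cdot>\<^sub>v ?y)"
    using Cons by simp
  also have "H *\<^sub>v (H *\<^sub>v ?y - s \<cdot>\<^sub>v ?y) = H *\<^sub>v (H *\<^sub>v ?y) - s \<cdot>\<^sub>v (H *\<^sub>v ?y)"
    using mult_minus_distrib_mat_vec[OF H Hy smult_carrier_vec[THEN iffD2, OF y]] mult_mat_vec[OF H y] by simp
  also have "H *\<^sub>v (H *\<^sub>v ?y - r \<cdot>\<^sub>v ?y) = H *\<^sub>v (H *\<^sub>v ?y) - r \<cdot>\<^sub>v (H *\<^sub>v ?y)"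
    using mult_minus_distrib_mat_vec[OF H Hy smult_carrier_vec[THEN iffD2, OF y]] mult_mat_vec[OF H y] by simp
  hence "H *\<^sub>v pv H (r # rs) b - s \<cdot>\<^sub>v pv H (r # rs) b =
     (H *\<^sub>v (H *\<^sub>v ?y) - r \<cdot>\<^sub>v (H *\<^sub>v ?y)) - s \<cdot>\<^sub>v (H *\<^sub>v ?y - r \<cdot>\<^sub>v ?y)" by simp
  moreover have "H *\<^sub>v (H *\<^sub>v ?y) - s \<cdot>\<^sub>v (H *\<^sub>v ?y) - r \<cdot>\<^sub>v (H *\<^sub>v ?y - s \<cdot>\<^sub>v ?y) =
     (H *\<^sub>v (H *\<^sub>v ?y) - r \<cdot>\<^sub>v (H *\<^sub>v ?y)) - s \<cdot>\<^sub>v (H *\<^sub>v ?y - r \<cdot>\<^sub>v ?y)"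
    by (rule eq_vecI, use y H in \<open>auto simp del: index_mult_mat_vec simp: algebra_simps\<close>)
  ultimately show ?case by simp
qed simp

lemma pv_eigen: assumes "e \<in> carrier_vec m" "H *\<^sub>v e = r \<cdot>\<^sub>v e"
  shows "pv H rs e = (\<Prod>s\<leftarrow>rs. r - s) \<cdot>\<^sub>v e"
proof (induction rs)
  case (Cons s rs)
  let ?q = "\<Prod>s\<leftarrow>rs. r - s"
  have "pv H (s # rs) e = H *\<^sub>v (?q \<cdot>\<^sub>v e) - s \<cdot>\<^sub>v (?q \<cdot>\<^sub>v e)" using Cons by simp
  also have "\<dots> = ?q \<cdot>\<^sub>v (r \<cdot>\<^sub>v e) - s \<cdot>\<^sub>v (?q \<cdot>\<^sub>v e)" using mult_mat_vec[OF H assms(1)] assms by simp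
  also have "\<dots> = ((r - s) * ?q) \<cdot>\<^sub>v e"
    by (rule eq_vecI, use assms in \<open>auto simp: algebra_simps\<close>)
  finally show ?case by simp
qed simp

lemma pv_split: assumes "b \<in> carrier_vec m"
  shows "pv H (xs @ s # ys) b = H *\<^sub>v pv H (xs @ ys) b - s \<cdot>\<^sub>v pv H (xs @ ys) b"
  using pv_commute[of "pv H ys b" xs s] assms by (simp add: pv_append)

end



context
  fixes H :: "complex mat" and m :: nat
  assumes H: "H \<in> carrier_mat m m" and herm: "hermitian H"
begin

lemma pv_sym: assumes "\<forall>s\<in>set rs. cnj s = s" "v \<in> carrier_vec m"
  shows "u \<in> carrier_vec m \<Longrightarrow> cinner u (pv H rs v) = cinner (pv H rs u) v"
  using assms(1)
proof (induction rs arbitrary: u)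
  case (Cons s rs)
  let ?y = "pv H rs v"
  have y: "?y \<in> carrier_vec m" using assms H by auto
  have u': "H *\<^sub>v u - s \<cdot>\<^sub>v u \<in> carrier_vec m" using Cons H by auto
  have s: "cnj s = s" using Cons by auto
  have "cinner u (pv H (s # rs) v) = cinner u (H *\<^sub>v ?y - s \<cdot>\<^sub>v ?y)" by simp
  also have "\<dots> = cinner (H *\<^sub>v u - s \<cdot>\<^sub>v u) ?y"
    using herm_shift[OF herm H Cons(2) y, of s] s by simp
  also have "\<dots> = cinner (pv H rs (H *\<^sub>v u - s \<cdot>\<^sub>v u)) v"
    using Cons u' by auto
  also have "\<dots> = cinner (pv H (s # rs) u) v"
    using pv_commute[OF H Cons(2)] by simp
  finally show ?case .
qed simp

lemma sq_zero: assumes "cnj r = r" "y \<in> carrier_vec m"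
  and "H *\<^sub>v (H *\<^sub>v y - r \<cdot>\<^sub>v y) - r \<cdot>\<^sub>v (H *\<^sub>v y - r \<cdot>\<^sub>v y) = 0\<^sub>v m"
  shows "H *\<^sub>v y - r \<cdot>\<^sub>v y = 0\<^sub>v m"
proof -
  let ?k = "H *\<^sub>v y - r \<cdot>\<^sub>v y"
  have k: "?k \<in> carrier_vec m" using H assms by auto
  have "cinner ?k ?k = cinner (H *\<^sub>v ?k - cnj r \<cdot>\<^sub>v ?k) y"
    using herm_shift[OF herm H k assms(2)] by simp
  also have "\<dots> = 0" using assms by simp
  finally have "vnorm ?k = 0" by (simp add: cinner_self)
  thus ?thesis using vnorm_zero_iff[OF k] by simp
qed

lemma resolvent_pv_aux:
  assumes d: "0 \<le> d" and gap: "\<And>\<nu>. eigenvalue H \<nu> \<Longrightarrow> d \<le> cmod (\<mu> - \<nu>)"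
  shows "length rs = n \<Longrightarrow> (\<forall>r\<in>set rs. cnj r = r) \<Longrightarrow> b \<in> carrier_vec m \<Longrightarrow> pv H rs b = 0\<^sub>v m \<Longrightarrow>
     d\<^sup>2 * (vnorm b)\<^sup>2 \<le> (vnorm (\<mu> \<cdot>\<^sub>v b - H *\<^sub>v b))\<^sup>2"
proof (induction n arbitrary: rs b rule: less_induct)
  case (less n)
  show ?case
  proof (cases rs)
    case Nil
    hence "vnorm b = 0" using less vnorm_zero_iff[of b m] by simp
    thus ?thesis by simp
  next
    case (Cons r rs')
    let ?c = "pv H rs' b"
    have b: "b \<in> carrier_vec m" using less by auto
    have c: "?c \<in> carrier_vec m" using b H by auto
    have rr: "cnj r = r" and rs'r: "\<forall>s\<in>set rs'. cnj s = s" using less Cons by auto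
    have lt: "length rs' < n" using less Cons by auto
    have Hc: "H *\<^sub>v ?c - r \<cdot>\<^sub>v ?c = 0\<^sub>v m" using less Cons by simp
    show ?thesis
    proof (cases "?c = 0\<^sub>v m")
      case True
      thus ?thesis using less.IH[OF lt refl rs'r b] by simp
    next
      case cne: False
      have rnot: "r \<notin> set rs'"
      proof
        assume "r \<in> set rs'"
        then obtain xs ys where xs: "rs' = xs @ r # ys" by (meson split_list)
        let ?z = "pv H (xs @ ys) b"
        have z: "?z \<in> carrier_vec m" using b H by auto
        have cz: "?c = H *\<^sub>v ?z - r \<cdot>\<^sub>v ?z" using pv_split[OF H b] xs by simp
        have "H *\<^sub>v ?z - r \<cdot>\<^sub>v ?z = 0\<^sub>v m" by (rule sq_zero[OF rr z], use Hc cz in simp)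
        thus False using cne cz by simp
      qed
      define q where "q = (\<Prod>s\<leftarrow>rs'. r - s)"
      have q: "q \<noteq> 0" unfolding q_def using rnot by (induction rs', auto)
      define e where "e = (1 / q) \<cdot>\<^sub>v ?c"
      have e: "e \<in> carrier_vec m" unfolding e_def using c by auto
      have He: "H *\<^sub>v e = r \<cdot>\<^sub>v e"
      proof -
        have "H *\<^sub>v ?c = r \<cdot>\<^sub>v ?c"
        proof (rule eq_vecI)
          fix i assume "i < dim_vec (r \<cdot>\<^sub>v ?c)"
          hence i: "i < m" using c by auto
          have "(H *\<^sub>v ?c - r \<cdot>\<^sub>v ?c) $ i = 0" using Hc i by simp
          thus "(H *\<^sub>v ?c) $ i = (r \<cdot>\<^sub>v ?c) $ i" using i c H by (simp del: index_mult_mat_vec)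
        qed (use c H in simp)
        thus ?thesis unfolding e_def using mult_mat_vec[OF H c]
          by (simp add: smult_smult_assoc mult.commute)
      qed
      have ene: "e \<noteq> 0\<^sub>v m"
      proof
        assume "e = 0\<^sub>v m"
        hence "q \<cdot>\<^sub>v e = 0\<^sub>v m" by (intro eq_vecI, auto)
        moreover have "q \<cdot>\<^sub>v e = ?c" unfolding e_def using q c by (simp add: smult_smult_assoc)
        ultimately show False using cne by simp
      qed
      have ev: "eigenvalue H r" unfolding eigenvalue_def eigenvector_def
        using e ene He H by auto
      have pve: "pv H rs' e = ?c"
        using pv_eigen[OF H e He, of rs'] q c unfolding e_def q_def by (simp add: smult_smult_assoc)
      define w where "w = b - e"
      have w: "w \<in> carrier_vec m" unfolding w_def using b e by auto
      have bew: "b = e + w" unfolding w_def using b e by auto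
      have pvw: "pv H rs' w = 0\<^sub>v m" unfolding w_def using pv_minus[OF H b e] pve c by simp
      have IHw: "d\<^sup>2 * (vnorm w)\<^sup>2 \<le> (vnorm (\<mu> \<cdot>\<^sub>v w - H *\<^sub>v w))\<^sup>2"
        using less.IH[OF lt refl rs'r w pvw] .
      have orth: "cinner e w = 0"
      proof -
        have "cinner (pv H rs' e) w = cinner e (pv H rs' w)" using pv_sym[OF rs'r w e] by simp
        hence "cinner (q \<cdot>\<^sub>v e) w = 0" using pvw pv_eigen[OF H e He, of rs'] unfolding q_def by simp
        hence "cnj q * cinner e w = 0" using e w by (simp add: cinner_smult_left)
        thus ?thesis using q by simp
      qed
      let ?g = "\<mu> \<cdot>\<^sub>v w - H *\<^sub>v w"
      have g: "?g \<in> carrier_vec m" using w H by auto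
      have dec: "\<mu> \<cdot>\<^sub>v b - H *\<^sub>v b = (\<mu> - r) \<cdot>\<^sub>v e + ?g"
      proof -
        have "H *\<^sub>v b = H *\<^sub>v e + H *\<^sub>v w" unfolding bew using mult_add_distrib_mat_vec[OF H e w] .
        hence "H *\<^sub>v b = r \<cdot>\<^sub>v e + H *\<^sub>v w" using He by simp
        thus ?thesis unfolding bew
          by (intro eq_vecI, insert e w H, auto simp del: index_mult_mat_vec simp: algebra_simps)
      qed
      have orth2: "cinner ((\<mu> - r) \<cdot>\<^sub>v e) ?g = 0"
      proof -
        have "cinner e ?g = \<mu> * cinner e w - cinner e (H *\<^sub>v w)"
          using e w H by (simp add: cinner_minus_right cinner_smult_right)
        also have "cinner e (H *\<^sub>v w) = cinner (H *\<^sub>v e) w" using herm_cinner[OF herm H e w] .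
        also have "\<dots> = 0" using He orth e w by (simp add: cinner_smult_left)
        finally have "cinner e ?g = 0" using orth by simp
        moreover have "dim_vec e = dim_vec ?g" using e g H by simp
        ultimately show ?thesis using cinner_smult_left[of e ?g "\<mu> - r"] by simp
      qed
      have n1: "(vnorm (\<mu> \<cdot>\<^sub>v b - H *\<^sub>v b))\<^sup>2 = (cmod (\<mu> - r))\<^sup>2 * (vnorm e)\<^sup>2 + (vnorm ?g)\<^sup>2"
        unfolding dec using pythag[OF _ orth2] e g H by (simp add: vnorm_smult power_mult_distrib)
      have n2: "(vnorm b)\<^sup>2 = (vnorm e)\<^sup>2 + (vnorm w)\<^sup>2"
        unfolding bew using pythag[OF _ orth] e w by simp
      have "d \<le> cmod (\<mu> - r)" using gap[OF ev] .
      hence "d\<^sup>2 \<le> (cmod (\<mu> - r))\<^sup>2" using d by (intro power_mono, auto)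
      hence "d\<^sup>2 * (vnorm e)\<^sup>2 \<le> (cmod (\<mu> - r))\<^sup>2 * (vnorm e)\<^sup>2" by (intro mult_right_mono, auto)
      thus ?thesis unfolding n1 n2 using IHw by (simp add: algebra_simps)
    qed
  qed
qed

end



lemma char_poly_factor: fixes H :: "complex mat" assumes H: "H \<in> carrier_mat m m"
  shows "\<exists>es. char_poly H = (\<Prod>e\<leftarrow>es. [:- e, 1:])"
proof -
  obtain es where es: "Polynomial.smult (lead_coeff (char_poly H)) (\<Prod>a\<leftarrow>es. [:- a, 1:]) = char_poly H"
    using fundamental_theorem_algebra_factorized by blast
  have "lead_coeff (char_poly H) = 1" using degree_monic_char_poly[OF H] by simp
  hence "char_poly H = (\<Prod>a\<leftarrow>es. [:- a, 1:])" using es by simp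
  thus ?thesis by blast
qed

lemma root_of_factors: fixes e :: complex assumes "e \<in> set es" shows "poly (\<Prod>a\<leftarrow>es. [:- a, 1:]) e = 0"
proof -
  have "poly (\<Prod>a\<leftarrow>es. [:- a, 1:]) e = (\<Prod>a\<leftarrow>es. e - a)" by (induction es) (auto simp: left_diff_distrib)
  moreover have "(\<Prod>a\<leftarrow>es. e - a) = 0" using assms by (auto simp: prod_list_zero_iff)
  ultimately show ?thesis by simp
qed

lemma triangular_annihilate: fixes B :: "complex mat"
  assumes B: "B \<in> carrier_mat m m" and ut: "upper_triangular B"
  shows "j \<le> m \<Longrightarrow> v \<in> carrier_vec m \<Longrightarrow> (\<forall>i. j \<le> i \<longrightarrow> i < m \<longrightarrow> v $ i = 0) \<Longrightarrow>
    pv B (take j (diag_mat B)) v = 0\<^sub>v m"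
proof (induction j arbitrary: v)
  case 0
  thus ?case by (intro eq_vecI, auto)
next
  case (Suc j)
  have jm: "j < m" using Suc by auto
  have tk: "take (Suc j) (diag_mat B) = take j (diag_mat B) @ [B $$ (j,j)]"
    using jm B by (simp add: take_Suc_conv_app_nth diag_mat_def)
  let ?w = "B *\<^sub>v v - B $$ (j,j) \<cdot>\<^sub>v v"
  have w: "?w \<in> carrier_vec m" using B Suc by auto
  have wz: "\<forall>i. j \<le> i \<longrightarrow> i < m \<longrightarrow> ?w $ i = 0"
  proof (intro allI impI)
    fix i assume ji: "j \<le> i" and im: "i < m"
    have "(B *\<^sub>v v) $ i = (\<Sum>l<m. B $$ (i,l) * v $ l)"
      using B Suc im unfolding mult_mat_vec_def scalar_prod_def row_def by (simp add: atLeast0LessThan)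
    also have "\<dots> = (\<Sum>l<m. if l = i then B $$ (i,i) * v $ i else 0)"
    proof (rule sum.cong[OF refl])
      fix l assume "l \<in> {..<m}"
      show "B $$ (i,l) * v $ l = (if l = i then B $$ (i,i) * v $ i else 0)"
      proof (cases "l < i")
        case True thus ?thesis using ut B im unfolding upper_triangular_def by auto
      next
        case False thus ?thesis using Suc.prems ji \<open>l \<in> {..<m}\<close> by auto
      qed
    qed
    also have "\<dots> = B $$ (i,i) * v $ i" using im by simp
    finally have "(B *\<^sub>v v) $ i = B $$ (i,i) * v $ i" .
    moreover have "i = j \<or> v $ i = 0"
    proof (cases "i = j")
      case False
      hence "Suc j \<le> i" using ji by simp
      thus ?thesis using Suc.prems(3) im by blast
    qed simp
    ultimately show "?w $ i = 0" using im Suc.prems by auto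
  qed
  have "pv B (take (Suc j) (diag_mat B)) v = pv B (take j (diag_mat B)) ?w"
    unfolding tk pv_append[OF B] by simp
  also have "\<dots> = 0\<^sub>v m" using Suc.IH[OF _ w] jm wz by auto
  finally show ?case .
qed

lemma pv_similar: fixes H B P Q :: "complex mat"
  assumes "similar_mat_wit H B P Q" and H: "H \<in> carrier_mat m m" and v: "v \<in> carrier_vec m"
  shows "pv H rs v = P *\<^sub>v pv B rs (Q *\<^sub>v v)"
proof -
  from similar_mat_witD2[OF H assms(1)] have B: "B \<in> carrier_mat m m" and P: "P \<in> carrier_mat m m"
    and Q: "Q \<in> carrier_mat m m" and QP: "Q * P = 1\<^sub>m m" and HPBQ: "H = P * B * Q"
    and PQ: "P * Q = 1\<^sub>m m" by auto
  show ?thesis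
  proof (induction rs)
    case (Cons r rs)
    let ?y = "pv B rs (Q *\<^sub>v v)"
    have y: "?y \<in> carrier_vec m" using pv_carrier[OF B] Q v by auto
    have "H *\<^sub>v (P *\<^sub>v ?y) = P *\<^sub>v (B *\<^sub>v ?y)"
    proof -
      have "H *\<^sub>v (P *\<^sub>v ?y) = (H * P) *\<^sub>v ?y" using H P y by simp
      also have "H * P = P * B * (Q * P)" unfolding HPBQ using P B Q by (simp add: assoc_mult_mat[of _ m m _ m _ m])
      also have "\<dots> = P * B" using QP P B by simp
      also have "(P * B) *\<^sub>v ?y = P *\<^sub>v (B *\<^sub>v ?y)" using P B y by simp
      finally show ?thesis .
    qed
    hence "pv H (r # rs) v = P *\<^sub>v (B *\<^sub>v ?y) - r \<cdot>\<^sub>v (P *\<^sub>v ?y)" using Cons by simp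
    also have "\<dots> = P *\<^sub>v (B *\<^sub>v ?y - r \<cdot>\<^sub>v ?y)"
      using mult_minus_distrib_mat_vec[OF P _ smult_carrier_vec[THEN iffD2, OF y], of "B *\<^sub>v ?y" r]
        mult_mat_vec[OF P y] B y by simp
    finally show ?case by simp
  next
    case Nil
    have "P *\<^sub>v (Q *\<^sub>v v) = (P * Q) *\<^sub>v v" using P Q v by simp
    thus ?case using PQ v by simp
  qed
qed

lemma annihilate: fixes H :: "complex mat" assumes H: "H \<in> carrier_mat m m"
  shows "\<exists>rs. (\<forall>r\<in>set rs. eigenvalue H r) \<and> (\<forall>b\<in>carrier_vec m. pv H rs b = 0\<^sub>v m)"
proof -
  obtain es where es: "char_poly H = (\<Prod>e\<leftarrow>es. [:- e, 1:])" using char_poly_factor[OF H] by blast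
  obtain B P Q where sd: "schur_decomposition H es = (B,P,Q)" by (cases "schur_decomposition H es", auto)
  from schur_decomposition[OF H es sd] have sim: "similar_mat_wit H B P Q"
    and ut: "upper_triangular B" and dg: "diag_mat B = es" by auto
  from similar_mat_witD2[OF H sim] have B: "B \<in> carrier_mat m m" and Q: "Q \<in> carrier_mat m m"
    and P: "P \<in> carrier_mat m m" by auto
  have len: "length es = m" using dg B unfolding diag_mat_def by auto
  show ?thesis
  proof (intro exI[of _ es] conjI ballI)
    fix r assume "r \<in> set es"
    thus "eigenvalue H r" unfolding eigenvalue_root_char_poly[OF H] es by (rule root_of_factors)
  next
    fix b :: "complex vec" assume b: "b \<in> carrier_vec m"
    have Qb: "Q *\<^sub>v b \<in> carrier_vec m" using Q b by auto
    have "pv B (take m (diag_mat B)) (Q *\<^sub>v b) = 0\<^sub>v m"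
      by (rule triangular_annihilate[OF B ut le_refl Qb], auto)
    hence "pv B es (Q *\<^sub>v b) = 0\<^sub>v m" using dg len by simp
    moreover have "P *\<^sub>v 0\<^sub>v m = 0\<^sub>v m" by (rule eq_vecI, use P in \<open>auto simp: scalar_prod_def\<close>)
    ultimately show "pv H es b = 0\<^sub>v m" using pv_similar[OF sim H b, of es] by simp
  qed
qed

lemma resolvent: fixes H :: "complex mat"
  assumes H: "H \<in> carrier_mat m m" and herm: "hermitian H" and d: "0 \<le> d"
  and gap: "\<And>\<nu>. eigenvalue H \<nu> \<Longrightarrow> d \<le> cmod (\<mu> - \<nu>)" and b: "b \<in> carrier_vec m"
  shows "d * vnorm b \<le> vnorm (\<mu> \<cdot>\<^sub>v b - H *\<^sub>v b)"
proof -
  obtain rs where rs: "\<forall>r\<in>set rs. eigenvalue H r" "\<forall>b\<in>carrier_vec m. pv H rs b = 0\<^sub>v m"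
    using annihilate[OF H] by blast
  have real: "\<forall>r\<in>set rs. cnj r = r"
  proof
    fix r assume "r \<in> set rs"
    then obtain e where "eigenvector H e r" using rs(1) unfolding eigenvalue_def by blast
    thus "cnj r = r" using herm_eig_real[OF herm H] H unfolding eigenvector_def by auto
  qed
  have "d\<^sup>2 * (vnorm b)\<^sup>2 \<le> (vnorm (\<mu> \<cdot>\<^sub>v b - H *\<^sub>v b))\<^sup>2"
    by (rule resolvent_pv_aux[OF H herm d gap refl real b], use rs b in auto)
  hence "(d * vnorm b)\<^sup>2 \<le> (vnorm (\<mu> \<cdot>\<^sub>v b - H *\<^sub>v b))\<^sup>2" by (simp add: power_mult_distrib)
  thus ?thesis using vnorm_nonneg by (rule power2_le_imp_le)
qed



lemma sum_split_add: fixes k p :: nat shows "(\<Sum>l<k + p. f l) = (\<Sum>l<k. f l) + (\<Sum>l<p. f (k + l))"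
  by (induction p) (auto simp: add.assoc)

lemma cinner_col: fixes M :: "complex mat"
  assumes "M \<in> carrier_mat r c" "j < c" "x \<in> carrier_vec r"
  shows "cinner (col M j) x = (mat_adjoint M *\<^sub>v x) $ j"
proof -
  have "(mat_adjoint M *\<^sub>v x) $ j = (\<Sum>i<r. mat_adjoint M $$ (j,i) * x $ i)"
    by (rule mat_vec_entry[OF adj_carrier[OF assms(1)] assms(3) assms(2)])
  also have "\<dots> = cinner (col M j) x" unfolding cinner_def using assms by (intro sum.cong, auto)
  finally show ?thesis by simp
qed

lemma mat3_vec: assumes "M1 \<in> carrier_mat r1 r2" "M2 \<in> carrier_mat r2 r3" "M3 \<in> carrier_mat r3 r4"
  "v \<in> carrier_vec r4"
  shows "(M1 * M2 * M3) *\<^sub>v v = M1 *\<^sub>v (M2 *\<^sub>v (M3 *\<^sub>v v))"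
proof -
  have "(M1 * M2 * M3) *\<^sub>v v = (M1 * M2) *\<^sub>v (M3 *\<^sub>v v)"
    by (rule assoc_mult_mat_vec[OF mult_carrier_mat[OF assms(1,2)] assms(3,4)])
  also have "\<dots> = M1 *\<^sub>v (M2 *\<^sub>v (M3 *\<^sub>v v))"
    by (rule assoc_mult_mat_vec[OF assms(1,2) mult_mat_vec_carrier[OF assms(3,4)]])
  finally show ?thesis .
qed

lemma mat4_vec: assumes "M1 \<in> carrier_mat r1 r2" "M2 \<in> carrier_mat r2 r3" "M3 \<in> carrier_mat r3 r4"
  "M4 \<in> carrier_mat r4 r5" "v \<in> carrier_vec r5"
  shows "(M1 * M2 * M3 * M4) *\<^sub>v v = M1 *\<^sub>v (M2 *\<^sub>v (M3 *\<^sub>v (M4 *\<^sub>v v)))"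
proof -
  have "(M1 * M2 * M3 * M4) *\<^sub>v v = (M1 * M2 * M3) *\<^sub>v (M4 *\<^sub>v v)"
    by (rule assoc_mult_mat_vec[OF mult_carrier_mat[OF mult_carrier_mat[OF assms(1,2)] assms(3)] assms(4,5)])
  also have "\<dots> = M1 *\<^sub>v (M2 *\<^sub>v (M3 *\<^sub>v (M4 *\<^sub>v v)))"
    by (rule mat3_vec[OF assms(1-3) mult_mat_vec_carrier[OF assms(4,5)]])
  finally show ?thesis .
qed

lemma core:
  fixes n k :: nat and A Q Qp \<Omega> R R2 A3 :: "complex mat" and lh :: "nat \<Rightarrow> real"
    and lam :: complex and x :: "complex vec" and d \<gamma> :: real
  assumes A: "A \<in> carrier_mat n n" and hA: "hermitian A"
    and Q: "Q \<in> carrier_mat n k" and k2: "2 \<le> k" and kn: "k \<le> n"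
    and \<Omega>: "\<Omega> \<in> carrier_mat k k" and u\<Omega>: "unitary \<Omega>"
    and QAQ: "mat_adjoint Q * A * Q = \<Omega> * diagm k lh * mat_adjoint \<Omega>"
    and Qp: "Qp \<in> carrier_mat n (n - k)" and uU: "unitary (hcat Q Qp)"
    and x: "x \<in> carrier_vec n" and nx: "vnorm x = 1" and Ax: "A *\<^sub>v x = lam \<cdot>\<^sub>v x"
    and R_def: "R = mat_adjoint Qp * A * Q * \<Omega>"
    and R2_def: "R2 = mat (n - k) (k - 1) (\<lambda>(i,j). R $$ (i, j + 1))"
    and A3_def: "A3 = mat_adjoint Qp * A * Qp"
    and d: "0 < d" and dgap: "\<And>\<nu>. eigenvalue A3 \<nu> \<Longrightarrow> d \<le> cmod (lam - \<nu>)"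
    and g: "0 < \<gamma>" and ggap: "\<And>i. i \<in> {1..<k} \<Longrightarrow> \<gamma> \<le> cmod (lam - complex_of_real (lh i))"
  shows "sin (vangle x (col (Q * \<Omega>) 0)) \<le> snorm R / d * sqrt (1 + (snorm R2)\<^sup>2 / \<gamma>\<^sup>2)"
proof -
  define QH where "QH = mat_adjoint Q"
  define QpH where "QpH = mat_adjoint Qp"
  define \<Omega>H where "\<Omega>H = mat_adjoint \<Omega>"
  define U where "U = hcat Q Qp"
  define D where "D = diagm k lh"
  have QH: "QH \<in> carrier_mat k n" unfolding QH_def using adj_carrier[OF Q] .
  have QpH: "QpH \<in> carrier_mat (n - k) n" unfolding QpH_def using adj_carrier[OF Qp] .
  have \<Omega>H: "\<Omega>H \<in> carrier_mat k k" unfolding \<Omega>H_def using adj_carrier[OF \<Omega>] .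
  have D: "D \<in> carrier_mat k k" unfolding D_def diagm_def by auto
  have nk: "n = k + (n - k)" using kn by simp
  have U: "U \<in> carrier_mat n n" unfolding U_def hcat_def using Q Qp kn by auto
  have Uidx: "U $$ (i,j) = (if j < k then Q $$ (i,j) else Qp $$ (i, j - k))" if "i < n" "j < n" for i j
    unfolding U_def hcat_def using that Q Qp kn by auto
  have UU: "U * mat_adjoint U = 1\<^sub>m n" using uU U unfolding unitary_def U_def[symmetric] by auto
  have \<Omega>\<Omega>H: "\<Omega> * \<Omega>H = 1\<^sub>m k" and \<Omega>H\<Omega>: "\<Omega>H * \<Omega> = 1\<^sub>m k"
    using u\<Omega> \<Omega> unfolding unitary_def \<Omega>H_def by auto
  define z where "z = QH *\<^sub>v x"
  define b where "b = QpH *\<^sub>v x"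
  define y where "y = mat_adjoint U *\<^sub>v x"
  define a where "a = \<Omega>H *\<^sub>v z"
  have z: "z \<in> carrier_vec k" unfolding z_def using QH x by auto
  have b: "b \<in> carrier_vec (n - k)" unfolding b_def using QpH x by auto
  have y: "y \<in> carrier_vec n" unfolding y_def using adj_carrier[OF U] x by auto
  have a: "a \<in> carrier_vec k" unfolding a_def using \<Omega>H z by auto
  have UH: "mat_adjoint U \<in> carrier_mat n n" using adj_carrier[OF U] .
  have yz: "y $ l = z $ l" if l: "l < k" for l
  proof -
    have "y $ l = (\<Sum>i<n. mat_adjoint U $$ (l,i) * x $ i)" unfolding y_def
      by (rule mat_vec_entry[OF UH x], use l kn in auto)
    also have "\<dots> = (\<Sum>i<n. QH $$ (l,i) * x $ i)"
      by (intro sum.cong refl, use l kn U Q Uidx in \<open>auto simp: QH_def\<close>)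
    also have "\<dots> = z $ l" unfolding z_def by (rule mat_vec_entry[OF QH x l, symmetric])
    finally show ?thesis .
  qed
  have yb: "y $ (k + l) = b $ l" if l: "l < n - k" for l
  proof -
    have "y $ (k + l) = (\<Sum>i<n. mat_adjoint U $$ (k + l,i) * x $ i)" unfolding y_def
      by (rule mat_vec_entry[OF UH x], use l kn in auto)
    also have "\<dots> = (\<Sum>i<n. QpH $$ (l,i) * x $ i)"
      by (intro sum.cong refl, use l kn U Qp Uidx in \<open>auto simp: QpH_def\<close>)
    also have "\<dots> = b $ l" unfolding b_def by (rule mat_vec_entry[OF QpH x l, symmetric])
    finally show ?thesis .
  qed
  have xUy: "x = U *\<^sub>v y"
  proof -
    have "U *\<^sub>v y = (U * mat_adjoint U) *\<^sub>v x" unfolding y_def using U UH x by simp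
    thus ?thesis using UU x by simp
  qed
  have xdec: "x = Q *\<^sub>v z + Qp *\<^sub>v b"
  proof (rule eq_vecI)
    fix i assume "i < dim_vec (Q *\<^sub>v z + Qp *\<^sub>v b)"
    hence i: "i < n" using Qp by simp
    have "x $ i = (\<Sum>l<n. U $$ (i,l) * y $ l)" by (subst xUy, rule mat_vec_entry[OF U y i])
    also have "\<dots> = (\<Sum>l<k. U $$ (i,l) * y $ l) + (\<Sum>l<n-k. U $$ (i,k+l) * y $ (k+l))"
      by (subst nk, subst sum_split_add, use nk in simp)
    also have "(\<Sum>l<k. U $$ (i,l) * y $ l) = (\<Sum>l<k. Q $$ (i,l) * z $ l)"
      by (intro sum.cong refl, use i kn Uidx yz in auto)
    also have "\<dots> = (Q *\<^sub>v z) $ i" by (rule mat_vec_entry[OF Q z i, symmetric])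
    also have "(\<Sum>l<n-k. U $$ (i,k+l) * y $ (k+l)) = (\<Sum>l<n-k. Qp $$ (i,l) * b $ l)"
      by (intro sum.cong refl, use i kn Uidx yb in auto)
    also have "\<dots> = (Qp *\<^sub>v b) $ i" by (rule mat_vec_entry[OF Qp b i, symmetric])
    finally show "x $ i = (Q *\<^sub>v z + Qp *\<^sub>v b) $ i" using i Qp by simp
  qed (use x Qp in simp)
  have ny: "(vnorm y)\<^sup>2 = 1"
  proof -
    have "cinner y y = cinner x (U *\<^sub>v y)" unfolding y_def using cinner_adj[OF U x y] y_def by simp
    also have "\<dots> = cinner x x" using xUy by simp
    finally have "complex_of_real ((vnorm y)\<^sup>2) = complex_of_real ((vnorm x)\<^sup>2)" by (simp only: cinner_self)
    hence "(vnorm y)\<^sup>2 = (vnorm x)\<^sup>2" by (simp only: of_real_eq_iff)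
    thus ?thesis using nx by simp
  qed
  have nzb: "(vnorm z)\<^sup>2 + (vnorm b)\<^sup>2 = 1"
  proof -
    have "(vnorm y)\<^sup>2 = (\<Sum>l<n. (cmod (y $ l))\<^sup>2)" using vnorm_sq[of y] y by simp
    also have "\<dots> = (\<Sum>l<k. (cmod (y $ l))\<^sup>2) + (\<Sum>l<n-k. (cmod (y $ (k+l)))\<^sup>2)"
      by (subst nk, subst sum_split_add, use nk in simp)
    also have "\<dots> = (vnorm z)\<^sup>2 + (vnorm b)\<^sup>2"
      using z b yz yb by (simp add: vnorm_sq)
    finally show ?thesis using ny by simp
  qed
  have za: "z = \<Omega> *\<^sub>v a"
  proof -
    have "\<Omega> *\<^sub>v a = (\<Omega> * \<Omega>H) *\<^sub>v z" unfolding a_def using \<Omega> \<Omega>H z by simp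
    thus ?thesis using \<Omega>\<Omega>H z by simp
  qed
  have na: "vnorm a = vnorm z"
  proof -
    have "cinner a a = cinner z (\<Omega> *\<^sub>v a)"
      using cinner_adj[OF \<Omega> z a] unfolding a_def \<Omega>H_def by simp
    also have "\<dots> = cinner z z" using za by simp
    finally have "complex_of_real ((vnorm a)\<^sup>2) = complex_of_real ((vnorm z)\<^sup>2)" by (simp only: cinner_self)
    hence "(vnorm a)\<^sup>2 = (vnorm z)\<^sup>2" by (simp only: of_real_eq_iff)
    thus ?thesis using vnorm_nonneg[of a] vnorm_nonneg[of z] by (simp add: power2_eq_iff_nonneg)
  qed
  have Ax2: "A *\<^sub>v x = A *\<^sub>v (Q *\<^sub>v (\<Omega> *\<^sub>v a)) + A *\<^sub>v (Qp *\<^sub>v b)"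
    using mult_add_distrib_mat_vec[OF A, of "Q *\<^sub>v z" "Qp *\<^sub>v b"] Q Qp z b xdec za by simp
  have R: "R \<in> carrier_mat (n - k) k" unfolding R_def QpH_def[symmetric]
    using mult_carrier_mat[OF mult_carrier_mat[OF mult_carrier_mat[OF QpH A] Q] \<Omega>] .
  have A3: "A3 \<in> carrier_mat (n - k) (n - k)" unfolding A3_def QpH_def[symmetric]
    using mult_carrier_mat[OF mult_carrier_mat[OF QpH A] Qp] .
  have eq1: "lam \<cdot>\<^sub>v b - A3 *\<^sub>v b = R *\<^sub>v a"
  proof -
    have "QpH *\<^sub>v (A *\<^sub>v x) = lam \<cdot>\<^sub>v b" unfolding Ax b_def by (rule mult_mat_vec[OF QpH x])
    moreover have "QpH *\<^sub>v (A *\<^sub>v x) = R *\<^sub>v a + A3 *\<^sub>v b"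
    proof -
      have "QpH *\<^sub>v (A *\<^sub>v x) = QpH *\<^sub>v (A *\<^sub>v (Q *\<^sub>v (\<Omega> *\<^sub>v a))) + QpH *\<^sub>v (A *\<^sub>v (Qp *\<^sub>v b))"
        unfolding Ax2 by (rule mult_add_distrib_mat_vec[OF QpH], use A Q \<Omega> a Qp b in auto)
      also have "QpH *\<^sub>v (A *\<^sub>v (Q *\<^sub>v (\<Omega> *\<^sub>v a))) = R *\<^sub>v a"
        unfolding R_def QpH_def[symmetric] using mat4_vec[OF QpH A Q \<Omega> a] by simp
      also have "QpH *\<^sub>v (A *\<^sub>v (Qp *\<^sub>v b)) = A3 *\<^sub>v b"
        unfolding A3_def QpH_def[symmetric] using mat3_vec[OF QpH A Qp b] by simp
      finally show ?thesis .
    qed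
    ultimately have e: "R *\<^sub>v a + A3 *\<^sub>v b = lam \<cdot>\<^sub>v b" by simp
    show ?thesis
    proof (rule eq_vecI)
      fix i assume "i < dim_vec (R *\<^sub>v a)" hence i: "i < n - k" using R by simp
      have "(R *\<^sub>v a + A3 *\<^sub>v b) $ i = (lam \<cdot>\<^sub>v b) $ i" using e by simp
      hence h: "lam * b $ i = (R *\<^sub>v a) $ i + (A3 *\<^sub>v b) $ i" using i R A3 b by (simp del: index_mult_mat_vec)
      show "(lam \<cdot>\<^sub>v b - A3 *\<^sub>v b) $ i = (R *\<^sub>v a) $ i" using i R A3 b by (simp del: index_mult_mat_vec add: h)
    qed (use R A3 in simp)
  qed
  have adjR: "mat_adjoint R *\<^sub>v b = \<Omega>H *\<^sub>v (QH *\<^sub>v (A *\<^sub>v (Qp *\<^sub>v b)))"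
  proof -
    have QpHA: "QpH * A \<in> carrier_mat (n - k) n" using QpH A by auto
    have QpHAQ: "QpH * A * Q \<in> carrier_mat (n - k) k" using QpHA Q by auto
    have "mat_adjoint R = \<Omega>H * mat_adjoint (QpH * A * Q)"
      unfolding R_def QpH_def[symmetric] \<Omega>H_def by (rule adj_mult[OF QpHAQ \<Omega>])
    also have "mat_adjoint (QpH * A * Q) = QH * mat_adjoint (QpH * A)"
      unfolding QH_def by (rule adj_mult[OF QpHA Q])
    also have "mat_adjoint (QpH * A) = mat_adjoint A * mat_adjoint QpH" by (rule adj_mult[OF QpH A])
    also have "\<dots> = A * Qp" using herm_adj[OF hA] unfolding QpH_def by simp
    finally have "mat_adjoint R = \<Omega>H * (QH * (A * Qp))" .
    hence "mat_adjoint R *\<^sub>v b = \<Omega>H *\<^sub>v ((QH * (A * Qp)) *\<^sub>v b)"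
      using assoc_mult_mat_vec[OF \<Omega>H mult_carrier_mat[OF QH mult_carrier_mat[OF A Qp]] b] by simp
    also have "(QH * (A * Qp)) *\<^sub>v b = QH *\<^sub>v ((A * Qp) *\<^sub>v b)"
      by (rule assoc_mult_mat_vec[OF QH mult_carrier_mat[OF A Qp] b])
    also have "(A * Qp) *\<^sub>v b = A *\<^sub>v (Qp *\<^sub>v b)" by (rule assoc_mult_mat_vec[OF A Qp b])
    finally show ?thesis .
  qed
  have eq2: "lam \<cdot>\<^sub>v a = D *\<^sub>v a + mat_adjoint R *\<^sub>v b"
  proof -
    have Qa: "Q *\<^sub>v (\<Omega> *\<^sub>v a) \<in> carrier_vec n" using Q \<Omega> a by auto
    have Qb: "Qp *\<^sub>v b \<in> carrier_vec n" using Qp b by auto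
    have "\<Omega>H *\<^sub>v (QH *\<^sub>v (A *\<^sub>v x)) = lam \<cdot>\<^sub>v a"
      unfolding Ax a_def z_def using mult_mat_vec[OF QH x] mult_mat_vec[OF \<Omega>H mult_mat_vec_carrier[OF QH x]] by simp
    moreover have "\<Omega>H *\<^sub>v (QH *\<^sub>v (A *\<^sub>v x)) =
        \<Omega>H *\<^sub>v (QH *\<^sub>v (A *\<^sub>v (Q *\<^sub>v (\<Omega> *\<^sub>v a)))) + \<Omega>H *\<^sub>v (QH *\<^sub>v (A *\<^sub>v (Qp *\<^sub>v b)))"
      unfolding Ax2 using mult_add_distrib_mat_vec[OF QH mult_mat_vec_carrier[OF A Qa] mult_mat_vec_carrier[OF A Qb]]
        mult_add_distrib_mat_vec[OF \<Omega>H mult_mat_vec_carrier[OF QH mult_mat_vec_carrier[OF A Qa]]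
          mult_mat_vec_carrier[OF QH mult_mat_vec_carrier[OF A Qb]]] by simp
    moreover have "QH *\<^sub>v (A *\<^sub>v (Q *\<^sub>v (\<Omega> *\<^sub>v a))) = \<Omega> *\<^sub>v (D *\<^sub>v a)"
    proof -
      have Oa: "\<Omega> *\<^sub>v a \<in> carrier_vec k" using \<Omega> a by auto
      have "QH *\<^sub>v (A *\<^sub>v (Q *\<^sub>v (\<Omega> *\<^sub>v a))) = (QH * A * Q) *\<^sub>v (\<Omega> *\<^sub>v a)"
        by (rule mat3_vec[OF QH A Q Oa, symmetric])
      also have "\<dots> = (\<Omega> * D * \<Omega>H) *\<^sub>v (\<Omega> *\<^sub>v a)" using QAQ unfolding QH_def D_def \<Omega>H_def by simp
      also have "\<dots> = \<Omega> *\<^sub>v (D *\<^sub>v (\<Omega>H *\<^sub>v (\<Omega> *\<^sub>v a)))" by (rule mat3_vec[OF \<Omega> D \<Omega>H Oa])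
      also have "\<Omega>H *\<^sub>v (\<Omega> *\<^sub>v a) = a"
        using assoc_mult_mat_vec[OF \<Omega>H \<Omega> a] \<Omega>H\<Omega> a by simp
      finally show ?thesis .
    qed
    moreover have "\<Omega>H *\<^sub>v (\<Omega> *\<^sub>v (D *\<^sub>v a)) = D *\<^sub>v a"
      using assoc_mult_mat_vec[OF \<Omega>H \<Omega> mult_mat_vec_carrier[OF D a]] \<Omega>H\<Omega> D a by simp
    ultimately show ?thesis using adjR by simp
  qed
  have R2: "R2 \<in> carrier_mat (n - k) (k - 1)" unfolding R2_def by auto
  have Da: "(D *\<^sub>v a) $ i = complex_of_real (lh i) * a $ i" if i: "i < k" for i
  proof -
    have "(D *\<^sub>v a) $ i = (\<Sum>j<k. D $$ (i,j) * a $ j)" by (rule mat_vec_entry[OF D a i])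
    also have "\<dots> = (\<Sum>j<k. if j = i then complex_of_real (lh i) * a $ i else 0)"
      by (intro sum.cong refl, use i in \<open>auto simp: D_def diagm_def\<close>)
    also have "\<dots> = complex_of_real (lh i) * a $ i" using i by simp
    finally show ?thesis .
  qed
  have adjRb: "(mat_adjoint R *\<^sub>v b) $ i = (lam - complex_of_real (lh i)) * a $ i" if i: "i < k" for i
  proof -
    have "(lam \<cdot>\<^sub>v a) $ i = (D *\<^sub>v a + mat_adjoint R *\<^sub>v b) $ i" using eq2 by simp
    hence "lam * a $ i = complex_of_real (lh i) * a $ i + (mat_adjoint R *\<^sub>v b) $ i"
      using i a R D Da[OF i] by (simp del: index_mult_mat_vec)
    thus ?thesis by (simp add: algebra_simps)
  qed
  have adjR2b: "(mat_adjoint R2 *\<^sub>v b) $ j = (mat_adjoint R *\<^sub>v b) $ Suc j" if j: "j < k - 1" for j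
  proof -
    have "(mat_adjoint R2 *\<^sub>v b) $ j = (\<Sum>l<n-k. mat_adjoint R2 $$ (j,l) * b $ l)"
      by (rule mat_vec_entry[OF adj_carrier[OF R2] b j])
    also have "\<dots> = (\<Sum>l<n-k. mat_adjoint R $$ (Suc j,l) * b $ l)"
      by (intro sum.cong refl, use j R R2 in \<open>auto simp: R2_def\<close>)
    also have "\<dots> = (mat_adjoint R *\<^sub>v b) $ Suc j"
      by (rule mat_vec_entry[OF adj_carrier[OF R] b, symmetric], use j in auto)
    finally show ?thesis .
  qed
  have ai: "\<gamma> * cmod (a $ Suc j) \<le> cmod ((mat_adjoint R2 *\<^sub>v b) $ j)" if j: "j < k - 1" for j
  proof -
    have "cmod ((mat_adjoint R2 *\<^sub>v b) $ j) = cmod (lam - complex_of_real (lh (Suc j))) * cmod (a $ Suc j)"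
      using adjR2b[OF j] adjRb[of "Suc j"] j by (simp add: norm_mult)
    moreover have "\<gamma> \<le> cmod (lam - complex_of_real (lh (Suc j)))" using ggap[of "Suc j"] j by auto
    ultimately show ?thesis by (simp add: mult_right_mono)
  qed
  have sumA: "\<gamma>\<^sup>2 * (\<Sum>j<k-1. (cmod (a $ Suc j))\<^sup>2) \<le> (snorm R2 * vnorm b)\<^sup>2"
  proof -
    have "\<gamma>\<^sup>2 * (\<Sum>j<k-1. (cmod (a $ Suc j))\<^sup>2) = (\<Sum>j<k-1. (\<gamma> * cmod (a $ Suc j))\<^sup>2)"
      by (simp add: sum_distrib_left power_mult_distrib)
    also have "\<dots> \<le> (\<Sum>j<k-1. (cmod ((mat_adjoint R2 *\<^sub>v b) $ j))\<^sup>2)"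
      by (intro sum_mono power_mono, use ai g in auto)
    also have "\<dots> = (vnorm (mat_adjoint R2 *\<^sub>v b))\<^sup>2" using R2 by (simp add: vnorm_sq)
    also have "\<dots> \<le> (snorm R2 * vnorm b)\<^sup>2"
      by (intro power_mono snorm_adj_bound vnorm_nonneg, use b R2 k2 in auto)
    finally show ?thesis .
  qed
  have hA3: "hermitian A3"
  proof -
    have QpHA: "QpH * A \<in> carrier_mat (n - k) n" using QpH A by auto
    have "mat_adjoint A3 = mat_adjoint Qp * mat_adjoint (QpH * A)"
      using adj_mult[OF QpHA Qp] unfolding A3_def QpH_def by simp
    also have "mat_adjoint (QpH * A) = mat_adjoint A * mat_adjoint QpH" by (rule adj_mult[OF QpH A])
    also have "\<dots> = A * Qp" using herm_adj[OF hA] unfolding QpH_def by simp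
    also have "mat_adjoint Qp * (A * Qp) = QpH * A * Qp" unfolding QpH_def[symmetric] by (rule assoc_mult_mat[OF QpH A Qp, symmetric])
    finally have "mat_adjoint A3 = A3" unfolding A3_def QpH_def .
    thus ?thesis unfolding hermitian_def using A3 by auto
  qed
  have sR: "0 \<le> snorm R" using snorm_nonneg[of R] R k2 by auto
  have na1: "vnorm a \<le> 1"
  proof -
    have "0 \<le> (vnorm b)\<^sup>2" by simp
    hence "(vnorm a)\<^sup>2 \<le> 1" unfolding na using nzb by linarith
    thus ?thesis using vnorm_nonneg[of a] by (simp add: power_le_one_iff)
  qed
  have bb: "d * vnorm b \<le> snorm R"
  proof -
    have "d * vnorm b \<le> vnorm (lam \<cdot>\<^sub>v b - A3 *\<^sub>v b)"
      by (rule resolvent[OF A3 hA3 _ dgap b], use d in auto)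
    also have "\<dots> = vnorm (R *\<^sub>v a)" using eq1 by simp
    also have "\<dots> \<le> snorm R * vnorm a" by (rule snorm_bound, use R a in auto)
    also have "\<dots> \<le> snorm R" using na1 sR vnorm_nonneg[of a] by (simp add: mult_left_le)
    finally show ?thesis .
  qed
  hence bb2: "(vnorm b)\<^sup>2 \<le> (snorm R / d)\<^sup>2"
    using d vnorm_nonneg[of b] by (intro power_mono, auto simp: field_simps)
  have a0: "cinner (col (Q * \<Omega>) 0) x = a $ 0"
  proof -
    have "cinner (col (Q * \<Omega>) 0) x = (mat_adjoint (Q * \<Omega>) *\<^sub>v x) $ 0"
      by (rule cinner_col[OF mult_carrier_mat[OF Q \<Omega>] _ x], use k2 in auto)
    also have "mat_adjoint (Q * \<Omega>) = \<Omega>H * QH" unfolding \<Omega>H_def QH_def by (rule adj_mult[OF Q \<Omega>])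
    also have "(\<Omega>H * QH) *\<^sub>v x = a" unfolding a_def z_def by (rule assoc_mult_mat_vec[OF \<Omega>H QH x])
    finally show ?thesis .
  qed
  define t where "t = cmod (a $ 0)"
  have asplit: "(vnorm a)\<^sup>2 = t\<^sup>2 + (\<Sum>j<k-1. (cmod (a $ Suc j))\<^sup>2)"
  proof -
    have k1: "k = 1 + (k - 1)" using k2 by simp
    have "(vnorm a)\<^sup>2 = (\<Sum>l<k. (cmod (a $ l))\<^sup>2)" using a by (simp add: vnorm_sq)
    also have "\<dots> = (\<Sum>l<1. (cmod (a $ l))\<^sup>2) + (\<Sum>l<k-1. (cmod (a $ (1 + l)))\<^sup>2)"
      by (subst k1, subst sum_split_add, use k1 in simp)
    finally show ?thesis unfolding t_def by simp
  qed
  have t0: "0 \<le> t" unfolding t_def by simp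
  have t1: "t \<le> 1" unfolding t_def using abs_entry_le_vnorm[of 0 a] a k2 na1 by auto
  define C where "C = 1 + (snorm R2)\<^sup>2 / \<gamma>\<^sup>2"
  have "1 - t\<^sup>2 = (\<Sum>j<k-1. (cmod (a $ Suc j))\<^sup>2) + (vnorm b)\<^sup>2" using asplit na nzb by simp
  also have "\<dots> \<le> (vnorm b)\<^sup>2 * C"
  proof -
    have "(\<Sum>j<k-1. (cmod (a $ Suc j))\<^sup>2) \<le> (snorm R2 * vnorm b)\<^sup>2 / \<gamma>\<^sup>2"
      using sumA g by (simp add: field_simps)
    thus ?thesis unfolding C_def by (simp add: field_simps power_mult_distrib)
  qed
  also have "\<dots> \<le> (snorm R / d)\<^sup>2 * C"
    using bb2 unfolding C_def by (intro mult_right_mono, auto)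
  finally have key: "1 - t\<^sup>2 \<le> (snorm R / d)\<^sup>2 * C" .
  have "sin (vangle x (col (Q * \<Omega>) 0)) = sqrt (1 - t\<^sup>2)"
    unfolding vangle_def a0 t_def[symmetric] using t0 t1 by (simp add: sin_arccos)
  also have "\<dots> \<le> sqrt ((snorm R / d)\<^sup>2 * C)" using key by (rule real_sqrt_le_mono)
  also have "\<dots> = snorm R / d * sqrt C" using sR d by (simp add: real_sqrt_mult)
  finally show ?thesis unfolding C_def .
qed



lemma aux_frac: fixes p s :: real assumes "0 < s" "0 \<le> p" shows "s * p / (2 * (p + 1)) < s"
proof -
  have den: "0 < 2*(p+1)" using assms by simp
  have "s * p < s * (2 * (p + 1))" using assms by (intro mult_strict_left_mono) auto
  thus ?thesis by (simp only: pos_divide_less_eq[OF den])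
qed

theorem theorem3p1:
  fixes n k :: nat and A Q Q\<^sub>p \<Omega> :: "complex mat" and lh :: "nat \<Rightarrow> real"
    and lam :: complex and x :: "complex vec"
  assumes "A \<in> carrier_mat n n" and "hermitian A"
    and "Q \<in> carrier_mat n k" and "2 \<le> k" and "k \<le> n"
    and "mat_adjoint Q * Q = 1\<^sub>m k"
    and "\<Omega> \<in> carrier_mat k k" and "unitary \<Omega>"
    and "mat_adjoint Q * A * Q = \<Omega> * diagm k lh * mat_adjoint \<Omega>"
    and "Q\<^sub>p \<in> carrier_mat n (n - k)" and "unitary (hcat Q Q\<^sub>p)"
    and "x \<in> carrier_vec n" and "vnorm x = 1" and "A *\<^sub>v x = lam \<cdot>\<^sub>v x"
  shows
    "let Xh = Q * \<Omega>;
         xh = col Xh 0;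
         R = mat_adjoint Q\<^sub>p * A * Q * \<Omega>;
         A\<^sub>3 = mat_adjoint Q\<^sub>p * A * Q\<^sub>p;
         R\<^sub>2 = mat (n - k) (k - 1) (\<lambda>(i,j). R $$ (i, j + 1));
         Gap = dist_spec lam A\<^sub>3;
         gap = Min ((\<lambda>i. cmod (lam - complex_of_real (lh i))) ` {1..<k});
         B\<^sub>1 = (if Gap = 0 \<or> gap = 0 then \<infinity>
               else ereal (snorm R) / Gap * ereal (sqrt (1 + (snorm R\<^sub>2)\<^sup>2 / gap\<^sup>2)));
         B\<^sub>2 = (if Gap = 0 \<or> gap = 0 then \<infinity>
               else ereal (snorm R) / Gap * ereal (1 + snorm R\<^sub>2 / gap))
     in ereal (sin (vangle x xh)) \<le> B\<^sub>1 \<and> B\<^sub>1 \<le> B\<^sub>2"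
proof -
  define R where "R = mat_adjoint Q\<^sub>p * A * Q * \<Omega>"
  define A3 where "A3 = mat_adjoint Q\<^sub>p * A * Q\<^sub>p"
  define R2 where "R2 = mat (n - k) (k - 1) (\<lambda>(i,j). R $$ (i, j + 1))"
  define Gap where "Gap = dist_spec lam A3"
  define gap where "gap = Min ((\<lambda>i. cmod (lam - complex_of_real (lh i))) ` {1..<k})"
  define C where "C = sqrt (1 + (snorm R2)\<^sup>2 / gap\<^sup>2)"
  define C2 where "C2 = 1 + snorm R2 / gap"
  define sn where "sn = sin (vangle x (col (Q * \<Omega>) 0))"
  have R: "R \<in> carrier_mat (n - k) k" unfolding R_def
    using mult_carrier_mat[OF mult_carrier_mat[OF mult_carrier_mat[OF adj_carrier[OF assms(10)] assms(1)] assms(3)] assms(7)] .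
  have R2: "R2 \<in> carrier_mat (n - k) (k - 1)" unfolding R2_def by auto
  have sR: "0 \<le> snorm R" using snorm_nonneg[of R] R assms(4) by auto
  have s2: "0 \<le> snorm R2" using snorm_nonneg[of R2] R2 assms(4) by auto
  have main: "ereal sn \<le> (if Gap = 0 \<or> gap = 0 then \<infinity> else ereal (snorm R) / Gap * ereal C) \<and>
     (if Gap = 0 \<or> gap = 0 then \<infinity> else ereal (snorm R) / Gap * ereal C)
       \<le> (if Gap = 0 \<or> gap = 0 then \<infinity> else ereal (snorm R) / Gap * ereal C2)"
  proof (cases "Gap = 0 \<or> gap = 0")
    case True thus ?thesis by simp
  next
    case False
    hence Gap0: "Gap \<noteq> 0" and gap0: "gap \<noteq> 0" by auto
    have fin: "finite ((\<lambda>i. cmod (lam - complex_of_real (lh i))) ` {1..<k})" by simp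
    have ne: "(\<lambda>i. cmod (lam - complex_of_real (lh i))) ` {1..<k} \<noteq> {}" using assms(4) by auto
    have "gap \<in> (\<lambda>i. cmod (lam - complex_of_real (lh i))) ` {1..<k}"
      unfolding gap_def using Min_in[OF fin ne] .
    hence "0 \<le> gap" by auto
    hence gpos: "0 < gap" using gap0 by simp
    have ggap: "\<And>i. i \<in> {1..<k} \<Longrightarrow> gap \<le> cmod (lam - complex_of_real (lh i))"
      unfolding gap_def using fin by (intro Min_le, auto)
    have CC2: "C \<le> C2"
    proof -
      have u: "0 \<le> snorm R2 / gap" using s2 gpos by simp
      have "1 + (snorm R2)\<^sup>2 / gap\<^sup>2 \<le> (1 + snorm R2 / gap)\<^sup>2"
        using u by (simp add: power2_sum power_divide)
      hence "C \<le> sqrt ((1 + snorm R2 / gap)\<^sup>2)" unfolding C_def by (rule real_sqrt_le_mono)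
      thus ?thesis unfolding C2_def using u by simp
    qed
    have C0: "0 \<le> C" unfolding C_def by simp
    have Gnn: "0 \<le> Gap" unfolding Gap_def dist_spec_def by (rule Inf_greatest, auto)
    have Glow: "\<And>\<nu>. eigenvalue A3 \<nu> \<Longrightarrow> Gap \<le> ereal (cmod (lam - \<nu>))"
      unfolding Gap_def dist_spec_def by (rule Inf_lower, auto)
    have corep: "sn \<le> snorm R / dd * C" if dd: "0 < dd" "\<And>\<nu>. eigenvalue A3 \<nu> \<Longrightarrow> dd \<le> cmod (lam - \<nu>)" for dd
      unfolding sn_def C_def
      by (rule core[OF assms(1-5) assms(7-14) R_def R2_def A3_def dd gpos ggap])
    show ?thesis
    proof (cases Gap)
      case (real gg)
      hence gg: "0 < gg" using Gnn Gap0 by auto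
      have "sn \<le> snorm R / gg * C"
        by (rule corep[OF gg], use Glow real in auto)
      moreover have "snorm R / gg * C \<le> snorm R / gg * C2"
        using CC2 sR gg by (intro mult_left_mono, auto)
      ultimately show ?thesis using False real gg by simp
    next
      case PInf
      have "sn \<le> 0"
      proof (rule ccontr)
        assume "\<not> sn \<le> 0"
        hence sp: "0 < sn" by simp
        define dd where "dd = 2 * (snorm R * C + 1) / sn"
        have "0 \<le> snorm R * C" using sR C0 by simp
        hence dd: "0 < dd" unfolding dd_def using sp by (intro divide_pos_pos, auto)
        have "sn \<le> snorm R / dd * C" by (rule corep[OF dd], use Glow PInf in auto)
        also have "snorm R / dd * C = sn * (snorm R * C) / (2 * (snorm R * C + 1))"
          unfolding dd_def using sp by (simp add: field_simps)
        also have "\<dots> < sn" using aux_frac[OF sp] sR C0 by simp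
        finally show False by simp
      qed
      thus ?thesis using False PInf by simp
    next
      case MInf thus ?thesis using Gnn by simp
    qed
  qed
  show ?thesis unfolding Let_def R_def[symmetric] A3_def[symmetric]
    unfolding R2_def[symmetric] Gap_def[symmetric] gap_def[symmetric]
    using main unfolding C_def C2_def sn_def by simp
qed


end
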